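(* For all $n\ge 1$, $w\text{-}sat(Q_n,Q_2)=2^n-1$.
   Context: $Q_n$ is the hypercube on $\{0,1\}^n$ with edges between vertices differing in exactly one coordinate; $Q_2$ is the 4-cycle. A graph $G\subseteq Q_n$ (on the full vertex set $\{0,1\}^n$) is $(Q_n,Q_2)$-weakly-saturated if the edges of $E(Q_n)\setminus E(G)$ can be added one at a time, in some order, so that each newly added edge creates at least one new subgraph isomorphic to $Q_2$ (in the current graph). $w\text{-}sat(Q_n,Q_2)$ is the minimum number of edges of a $(Q_n,Q_2)$-weakly-saturated graph. *)

theory Defs
  imports Main
begin

text \<open>Vertices of Q_n: subsets of {0..<n} (identified with 0/1-vectors of length n).
 Edges are unordered pairs {A, insert i A} with i < n, i not in A (differ in one coordinate).\<close>

definition hypercube_vertices :: "nat \<Rightarrow> nat set set" where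
  "hypercube_vertices n = Pow {..<n}"

definition hypercube_edges :: "nat \<Rightarrow> nat set set set" where
  "hypercube_edges n = {{A, insert i A} | A i. A \<subseteq> {..<n} \<and> i < n \<and> i \<notin> A}"

definition C4_copies :: "'v set set \<Rightarrow> 'v set set set" where
  "C4_copies H = {{{a,b},{b,c},{c,d},{d,a}} | a b c d.
       distinct [a,b,c,d] \<and> {a,b} \<in> H \<and> {b,c} \<in> H \<and> {c,d} \<in> H \<and> {d,a} \<in> H}"

definition creates_new_C4 :: "'v set set \<Rightarrow> 'v set \<Rightarrow> bool" where
  "creates_new_C4 H e \<longleftrightarrow> (\<exists>C \<in> C4_copies (insert e H). C \<notin> C4_copies H)"

definition weakly_saturated :: "nat \<Rightarrow> nat set set set \<Rightarrow> bool" where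
  "weakly_saturated n G \<longleftrightarrow> G \<subseteq> hypercube_edges n \<and>
     (\<exists>es. distinct es \<and> set es = hypercube_edges n - G \<and>
        (\<forall>k < length es. creates_new_C4 (G \<union> set (take k es)) (es ! k)))"

definition wsat_Qn_Q2 :: "nat \<Rightarrow> nat" where
  "wsat_Qn_Q2 n = (LEAST m. \<exists>G. weakly_saturated n G \<and> card G = m)"

end

theory Submission
  imports Defs
begin


definition Fam :: "'v set \<Rightarrow> 'v set set \<Rightarrow> 'v set set" where
  "Fam V E = {S. S \<subseteq> V \<and> (\<forall>a b. {a,b} \<in> E \<longrightarrow> (a\<in>S \<longleftrightarrow> b\<in>S))}"

lemma fam_empty: "Fam V {} = Pow V"
  by (auto simp: Fam_def)

lemma fam_step:
  assumes "finite V"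
  shows "card (Fam V E) \<le> 2 * card (Fam V (insert e E))"
proof -
  let ?F = "Fam V E" and ?F' = "Fam V (insert e E)"
  have sub: "?F' \<subseteq> ?F" by (auto simp: Fam_def)
  have finF: "finite ?F" by (rule finite_subset[of _ "Pow V"]) (auto simp: Fam_def assms)
  have finF': "finite ?F'" using finF sub finite_subset by blast
  show ?thesis
  proof (cases "?F \<subseteq> ?F'")
    case True
    then have "card ?F \<le> card ?F'" using finF' by (rule card_mono[rotated])
    then show ?thesis by simp
  next
    case False
    then obtain g where g: "g \<in> ?F" "g \<notin> ?F'" by blast
    then obtain a b where ab: "{a,b} = e" "\<not> (a \<in> g \<longleftrightarrow> b \<in> g)"
      by (auto simp: Fam_def)
    define h where "h S = (S - g) \<union> (g - S)" for S
    have img: "h ` (?F - ?F') \<subseteq> ?F'"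
    proof
      fix T assume "T \<in> h ` (?F - ?F')"
      then obtain S where S: "S \<in> ?F" "S \<notin> ?F'" and T: "T = h S" by blast
      from S obtain x y where xy: "{x,y} = e" "\<not> (x \<in> S \<longleftrightarrow> y \<in> S)"
        by (auto simp: Fam_def)
      show "T \<in> ?F'"
        unfolding Fam_def
      proof (intro CollectI conjI allI impI)
        show "T \<subseteq> V" using S g T by (auto simp: Fam_def h_def)
        fix p q assume pq: "{p,q} \<in> insert e E"
        show "p \<in> T \<longleftrightarrow> q \<in> T"
        proof (cases "{p,q} \<in> E")
          case True
          then show ?thesis using S(1) g(1) T by (auto simp: Fam_def h_def)
        next
          case False
          then have "{p,q} = e" using pq by auto
          then have pq': "(p = a \<and> q = b) \<or> (p = b \<and> q = a)" using ab(1) by (metis doubleton_eq_iff)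
          have xy': "(x = a \<and> y = b) \<or> (x = b \<and> y = a)" using ab(1) xy(1) by (metis doubleton_eq_iff)
          have aS: "\<not> (a \<in> S \<longleftrightarrow> b \<in> S)" using xy' xy(2) by blast
          have "a \<in> T \<longleftrightarrow> b \<in> T" using aS ab(2) unfolding T h_def by blast
          then show ?thesis using pq' by blast
        qed
      qed
    qed
    have inj: "inj_on h (?F - ?F')"
      by (rule inj_onI) (auto simp: h_def)
    have "card (?F - ?F') \<le> card ?F'"
      using card_inj_on_le[OF inj img finF'] .
    moreover have "card ?F = card ?F' + card (?F - ?F')"
      using card_Diff_subset[OF finF' sub] card_mono[OF finF sub] by simp
    ultimately show ?thesis by simp
  qed
qed

lemma fam_bound:
  assumes "finite V" "finite E"
  shows "card (Pow V) \<le> 2 ^ card E * card (Fam V E)"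
  using assms(2)
proof (induction E rule: finite_induct)
  case empty
  then show ?case by (simp add: fam_empty)
next
  case (insert e E)
  have "card (Pow V) \<le> 2 ^ card E * card (Fam V E)" by fact
  also have "\<dots> \<le> 2 ^ card E * (2 * card (Fam V (insert e E)))"
    using fam_step[OF assms(1)] by simp
  finally show ?case using insert by simp
qed

lemma four_cases:
  assumes "x1 \<in> H \<or> x1 = e" "x2 \<in> H \<or> x2 = e" "x3 \<in> H \<or> x3 = e" "x4 \<in> H \<or> x4 = e"
    "x1 \<noteq> x2" "x1 \<noteq> x3" "x1 \<noteq> x4" "x2 \<noteq> x3" "x2 \<noteq> x4" "x3 \<noteq> x4"
    "\<not> (x1 \<in> H \<and> x2 \<in> H \<and> x3 \<in> H \<and> x4 \<in> H)"
  shows "(x1 \<in> H \<and> x2 \<in> H \<and> x3 \<in> H \<and> e = x4) \<or>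
     (x2 \<in> H \<and> x3 \<in> H \<and> x4 \<in> H \<and> e = x1) \<or>
     (x3 \<in> H \<and> x4 \<in> H \<and> x1 \<in> H \<and> e = x2) \<or>
     (x4 \<in> H \<and> x1 \<in> H \<and> x2 \<in> H \<and> e = x3)"
  using assms by blast

lemma fam_edge: "S \<in> Fam V H \<Longrightarrow> {x,y} \<in> H \<Longrightarrow> (x \<in> S \<longleftrightarrow> y \<in> S)"
  unfolding Fam_def by blast

lemma creates_fam:
  assumes "creates_new_C4 H e"
  shows "Fam V (insert e H) = Fam V H"
proof
  show "Fam V (insert e H) \<subseteq> Fam V H" by (auto simp: Fam_def)
next
  from assms obtain a b c d where
    d: "distinct [a,b,c,d]" and m: "{a,b} \<in> insert e H" "{b,c} \<in> insert e H"
       "{c,d} \<in> insert e H" "{d,a} \<in> insert e H"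
    and nH: "\<not> ({a,b} \<in> H \<and> {b,c} \<in> H \<and> {c,d} \<in> H \<and> {d,a} \<in> H)"
  proof -
    from assms obtain C where C1: "C \<in> C4_copies (insert e H)" and C2: "C \<notin> C4_copies H"
      unfolding creates_new_C4_def by blast
    from C1 have ex: "\<exists>a b c d. C = {{a,b},{b,c},{c,d},{d,a}} \<and>
      distinct [a,b,c,d] \<and> {a,b} \<in> insert e H \<and> {b,c} \<in> insert e H \<and>
       {c,d} \<in> insert e H \<and> {d,a} \<in> insert e H"
      by (simp only: C4_copies_def mem_Collect_eq)
    then obtain a b c d where Ceq: "C = {{a,b},{b,c},{c,d},{d,a}}" and
      d: "distinct [a,b,c,d]" and m: "{a,b} \<in> insert e H" "{b,c} \<in> insert e H"
       "{c,d} \<in> insert e H" "{d,a} \<in> insert e H"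
      by (elim exE conjE)
    have "\<not> ({a,b} \<in> H \<and> {b,c} \<in> H \<and> {c,d} \<in> H \<and> {d,a} \<in> H)"
    proof
      assume H4: "{a,b} \<in> H \<and> {b,c} \<in> H \<and> {c,d} \<in> H \<and> {d,a} \<in> H"
      have "C \<in> C4_copies H" unfolding C4_copies_def mem_Collect_eq Ceq
        apply (rule exI[of _ a], rule exI[of _ b], rule exI[of _ c], rule exI[of _ d])
        apply (intro conjI refl d)
        using H4 by auto
      then show False using C2 by simp
    qed
    then show ?thesis by (rule that[OF d m])
  qed
  have dd: "a \<noteq> b" "a \<noteq> c" "a \<noteq> d" "b \<noteq> c" "b \<noteq> d" "c \<noteq> d" using d by auto
  have ne: "{a,b} \<noteq> {b,c}" "{a,b} \<noteq> {c,d}" "{a,b} \<noteq> {d,a}" "{b,c} \<noteq> {c,d}"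
     "{b,c} \<noteq> {d,a}" "{c,d} \<noteq> {d,a}" using dd by (simp_all add: doubleton_eq_iff)
  have m': "{a,b} \<in> H \<or> {a,b} = e" "{b,c} \<in> H \<or> {b,c} = e" "{c,d} \<in> H \<or> {c,d} = e"
     "{d,a} \<in> H \<or> {d,a} = e" using m by auto
  note cases = four_cases[OF m' ne nH]
  have "e \<in> {{a,b},{b,c},{c,d},{d,a}}" using cases by (elim disjE conjE) simp_all
  then have esub: "e \<subseteq> {a,b,c,d}" by auto
  show "Fam V H \<subseteq> Fam V (insert e H)"
  proof
    fix S assume S: "S \<in> Fam V H"
    have all: "\<forall>x\<in>{a,b,c,d}. x \<in> S \<longleftrightarrow> a \<in> S"
      using cases
    proof (elim disjE conjE)
      assume "{a,b} \<in> H" "{b,c} \<in> H" "{c,d} \<in> H"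
      then show ?thesis using fam_edge[OF S \<open>{a,b} \<in> H\<close>] fam_edge[OF S \<open>{b,c} \<in> H\<close>] fam_edge[OF S \<open>{c,d} \<in> H\<close>] by simp
    next
      assume "{b,c} \<in> H" "{c,d} \<in> H" "{d,a} \<in> H"
      then show ?thesis using fam_edge[OF S \<open>{b,c} \<in> H\<close>] fam_edge[OF S \<open>{c,d} \<in> H\<close>] fam_edge[OF S \<open>{d,a} \<in> H\<close>] by simp
    next
      assume "{c,d} \<in> H" "{d,a} \<in> H" "{a,b} \<in> H"
      then show ?thesis using fam_edge[OF S \<open>{c,d} \<in> H\<close>] fam_edge[OF S \<open>{d,a} \<in> H\<close>] fam_edge[OF S \<open>{a,b} \<in> H\<close>] by simp
    next
      assume "{d,a} \<in> H" "{a,b} \<in> H" "{b,c} \<in> H"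
      then show ?thesis using fam_edge[OF S \<open>{d,a} \<in> H\<close>] fam_edge[OF S \<open>{a,b} \<in> H\<close>] fam_edge[OF S \<open>{b,c} \<in> H\<close>] by simp
    qed
    have "\<forall>p q. {p,q} = e \<longrightarrow> (p \<in> S \<longleftrightarrow> q \<in> S)"
    proof (intro allI impI)
      fix p q assume "{p,q} = e"
      then have "p \<in> {a,b,c,d}" "q \<in> {a,b,c,d}" using esub by auto
      then show "p \<in> S \<longleftrightarrow> q \<in> S" using all by blast
    qed
    then show "S \<in> Fam V (insert e H)" using S unfolding Fam_def by blast
  qed
qed



lemma hyp_mem: "e \<in> hypercube_edges n \<longleftrightarrow> (\<exists>A i. e = {A, insert i A} \<and> A \<subseteq> {..<n} \<and> i < n \<and> i \<notin> A)"
  by (auto simp: hypercube_edges_def)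

lemma finite_hyp: "finite (hypercube_edges n)"
  by (rule finite_subset[of _ "Pow (Pow {..<n})"]) (auto simp: hypercube_edges_def)

lemma hyp_fam:
  assumes "S \<in> Fam (Pow {..<n}) (hypercube_edges n)"
  shows "S = {} \<or> S = Pow {..<n}"
proof -
  have key: "finite A \<Longrightarrow> A \<subseteq> {..<n} \<longrightarrow> (A \<in> S \<longleftrightarrow> {} \<in> S)" for A
  proof (induction A rule: finite_induct)
    case empty then show ?case by simp
  next
    case (insert x F)
    show ?case
    proof
      assume sub: "insert x F \<subseteq> {..<n}"
      have "{F, insert x F} \<in> hypercube_edges n" using sub insert(2) by (auto simp: hyp_mem)
      then have "F \<in> S \<longleftrightarrow> insert x F \<in> S" using assms by (auto simp: Fam_def)
      then show "insert x F \<in> S \<longleftrightarrow> {} \<in> S" using insert sub by auto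
    qed
  qed
  have all: "A \<subseteq> {..<n} \<Longrightarrow> (A \<in> S \<longleftrightarrow> {} \<in> S)" for A
    using key[of A] finite_subset[of A "{..<n}"] by auto
  have "S \<subseteq> Pow {..<n}" using assms by (auto simp: Fam_def)
  then show ?thesis using all by blast
qed

lemma lower_bound:
  assumes ws: "weakly_saturated n G"
  shows "2 ^ n \<le> card G + 1"
proof -
  let ?V = "Pow {..<n}"
  from ws have Gsub: "G \<subseteq> hypercube_edges n" and
    es: "\<exists>es. distinct es \<and> set es = hypercube_edges n - G \<and>
        (\<forall>k < length es. creates_new_C4 (G \<union> set (take k es)) (es ! k))"
    by (auto simp: weakly_saturated_def)
  then obtain es where es1: "set es = hypercube_edges n - G"
    and es2: "\<forall>k < length es. creates_new_C4 (G \<union> set (take k es)) (es ! k)" by blast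
  have step: "k \<le> length es \<Longrightarrow> Fam ?V (G \<union> set (take k es)) = Fam ?V G" for k
  proof (induction k)
    case 0 then show ?case by simp
  next
    case (Suc k)
    then have k: "k < length es" by simp
    have "set (take (Suc k) es) = insert (es ! k) (set (take k es))"
      using k by (simp add: take_Suc_conv_app_nth)
    then have "Fam ?V (G \<union> set (take (Suc k) es)) = Fam ?V (insert (es!k) (G \<union> set (take k es)))"
      by simp
    also have "\<dots> = Fam ?V (G \<union> set (take k es))"
      using creates_fam es2 k by blast
    finally show ?case using Suc by simp
  qed
  have "G \<union> set es = hypercube_edges n" using es1 Gsub by auto
  then have famG: "Fam ?V G = Fam ?V (hypercube_edges n)" using step[of "length es"] by simp
  have "Fam ?V G \<subseteq> {{}, ?V}" using famG hyp_fam by blast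
  then have c2: "card (Fam ?V G) \<le> 2"
  proof -
    have "card {{}, ?V} \<le> 2" by (simp add: card_insert_if)
    then show ?thesis using card_mono[of "{{}, ?V}" "Fam ?V G"] \<open>Fam ?V G \<subseteq> {{}, ?V}\<close> by simp
  qed
  have finG: "finite G" using Gsub finite_hyp finite_subset by blast
  have "card (Pow ?V) \<le> 2 ^ card G * card (Fam ?V G)"
    using fam_bound[OF _ finG] by simp
  also have "\<dots> \<le> 2 ^ card G * 2" using c2 by simp
  finally have "(2::nat) ^ (2 ^ n) \<le> 2 ^ (card G + 1)"
    by (simp add: card_Pow)
  then show ?thesis using power_le_imp_le_exp[of "2::nat" "2^n" "card G + 1"] by linarith
qed



definition good :: "'v set set \<Rightarrow> 'v set \<Rightarrow> bool" where
  "good H e \<longleftrightarrow> e \<notin> H \<and> (\<exists>a b c d. distinct [a,b,c,d] \<and> e = {a,b} \<and> {b,c} \<in> H \<and> {c,d} \<in> H \<and> {d,a} \<in> H)"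

lemma good_mono: "good H e \<Longrightarrow> H \<subseteq> H' \<Longrightarrow> e \<notin> H' \<Longrightarrow> good H' e"
  unfolding good_def by blast

lemma good_creates:
  assumes "good H e" shows "creates_new_C4 H e"
proof -
  from assms obtain a b c d where d: "distinct [a,b,c,d]" and e: "e = {a,b}" and
    m: "{b,c} \<in> H" "{c,d} \<in> H" "{d,a} \<in> H" and nH: "e \<notin> H"
    unfolding good_def by blast
  let ?C = "{{a,b},{b,c},{c,d},{d,a}}"
  have "?C \<in> C4_copies (insert e H)" unfolding C4_copies_def mem_Collect_eq
    apply (rule exI[of _ a], rule exI[of _ b], rule exI[of _ c], rule exI[of _ d])
    apply (intro conjI refl d)
    using m e by auto
  moreover have "?C \<notin> C4_copies H"
  proof
    assume "?C \<in> C4_copies H"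
    then have "\<exists>a' b' c' d'. ?C = {{a',b'},{b',c'},{c',d'},{d',a'}} \<and> distinct [a',b',c',d'] \<and>
      {a',b'} \<in> H \<and> {b',c'} \<in> H \<and> {c',d'} \<in> H \<and> {d',a'} \<in> H"
      by (simp only: C4_copies_def mem_Collect_eq)
    then obtain a' b' c' d' where Ce: "?C = {{a',b'},{b',c'},{c',d'},{d',a'}}" and
      h: "{a',b'} \<in> H" "{b',c'} \<in> H" "{c',d'} \<in> H" "{d',a'} \<in> H"
      by (elim exE conjE)
    have "{a,b} \<in> ?C" by simp
    then have "{a,b} \<in> {{a',b'},{b',c'},{c',d'},{d',a'}}" by (simp only: Ce)
    then have "{a,b} \<in> H" using h by (elim insertE) auto
    then show False using nH e by simp
  qed
  ultimately show ?thesis unfolding creates_new_C4_def by blast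
qed

lemma order_exists:
  fixes rk :: "'v set \<Rightarrow> nat"
  assumes "finite R"
  shows "(\<forall>e\<in>R. good (H \<union> {e'\<in>R. rk e' < rk e}) e) \<longrightarrow>
    (\<exists>es. distinct es \<and> set es = R \<and> (\<forall>k<length es. good (H \<union> set (take k es)) (es!k)))"
  using assms
proof (induction R rule: finite_ranking_induct[where f = rk])
  case empty
  then show ?case by (intro impI exI[of _ "[]"]) simp
next
  case (insert x S)
  show ?case
  proof
    assume hyp: "\<forall>e\<in>insert x S. good (H \<union> {e' \<in> insert x S. rk e' < rk e}) e"
    show "\<exists>es. distinct es \<and> set es = insert x S \<and> (\<forall>k<length es. good (H \<union> set (take k es)) (es!k))"
    proof (cases "x \<in> S")
      case True
      then have "insert x S = S" by blast
      with hyp insert.IH show ?thesis by simp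
    next
      case False
      have "\<forall>e\<in>S. good (H \<union> {e' \<in> S. rk e' < rk e}) e"
      proof
        fix e assume eS: "e \<in> S"
        have "{e' \<in> insert x S. rk e' < rk e} = {e' \<in> S. rk e' < rk e}"
          using insert.hyps(2)[OF eS] by auto
        then show "good (H \<union> {e' \<in> S. rk e' < rk e}) e" using hyp eS by auto
      qed
      then obtain es where es: "distinct es" "set es = S"
        "\<forall>k<length es. good (H \<union> set (take k es)) (es!k)" using insert.IH by blast
      have gx: "good (H \<union> {e' \<in> insert x S. rk e' < rk x}) x" using hyp by auto
      have gx': "good (H \<union> set es) x"
      proof (rule good_mono[OF gx])
        show "H \<union> {e' \<in> insert x S. rk e' < rk x} \<subseteq> H \<union> set es" using es(2) by auto
        show "x \<notin> H \<union> set es" using gx False es(2) unfolding good_def by auto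
      qed
      show ?thesis
      proof (intro exI[of _ "es @ [x]"] conjI allI impI)
        show "distinct (es @ [x])" using es False by simp
        show "set (es @ [x]) = insert x S" using es by simp
        fix k assume k: "k < length (es @ [x])"
        show "good (H \<union> set (take k (es @ [x]))) ((es @ [x]) ! k)"
        proof (cases "k < length es")
          case True
          then show ?thesis using es(3) by (simp add: nth_append)
        next
          case False
          then have "k = length es" using k by simp
          then show ?thesis using gx' by simp
        qed
      qed
    qed
  qed
qed



definition Tn :: "nat \<Rightarrow> nat set set set" where
  "Tn n = (\<lambda>B. {B - {Max B}, B}) ` (Pow {..<n} - {{}})"

lemma edge_unique:
  assumes "i \<notin> A" "i' \<notin> A'" "{A, insert i A} = {A', insert i' A'}"
  shows "A = A' \<and> i = i'"
proof -
  have "(A = A' \<and> insert i A = insert i' A') \<or> (A = insert i' A' \<and> insert i A = A')"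
    using assms(3) by (rule doubleton_eq_iff[THEN iffD1])
  then show ?thesis
  proof
    assume h: "A = A' \<and> insert i A = insert i' A'"
    then have "i \<in> insert i' A'" by blast
    then show ?thesis using h assms(1) by blast
  next
    assume h: "A = insert i' A' \<and> insert i A = A'"
    then have "i' \<in> A'" by blast
    then show ?thesis using assms(2) by blast
  qed
qed

lemma T_mem:
  assumes "A \<subseteq> {..<n}" "i < n" "i \<notin> A" "\<forall>j\<in>A. j < i"
  shows "{A, insert i A} \<in> Tn n"
proof -
  have fin: "finite (insert i A)" using assms(1) finite_subset by blast
  have mx: "Max (insert i A) = i"
  proof (rule Max_eqI[OF fin])
    fix y assume "y \<in> insert i A"
    then show "y \<le> i" using assms(4) by (auto simp: less_imp_le)
  qed simp
  have d: "insert i A - {i} = A" using assms(3) by blast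
  have eq: "{A, insert i A} = (\<lambda>B. {B - {Max B}, B}) (insert i A)" by (simp only: mx d)
  have mem: "insert i A \<in> Pow {..<n} - {{}}" using assms(1,2) by blast
  show ?thesis unfolding Tn_def eq by (rule imageI[OF mem])
qed

lemma T_sub: "Tn n \<subseteq> hypercube_edges n"
proof
  fix e assume "e \<in> Tn n"
  then obtain B where e: "e = {B - {Max B}, B}" and Bm: "B \<in> Pow {..<n} - {{}}"
    unfolding Tn_def by (rule imageE)
  have B: "B \<subseteq> {..<n}" "B \<noteq> {}" using Bm by auto
  have fin: "finite B" using B(1) finite_subset by blast
  have m: "Max B \<in> B" using fin B(2) by (rule Max_in)
  have Bi: "B = insert (Max B) (B - {Max B})" using m by blast
  have "e = {B - {Max B}, insert (Max B) (B - {Max B})}"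
    unfolding e by (subst Bi[symmetric]) (rule refl)
  moreover have "B - {Max B} \<subseteq> {..<n}" "Max B < n" "Max B \<notin> B - {Max B}" using B m by auto
  ultimately show "e \<in> hypercube_edges n" unfolding hyp_mem by blast
qed

lemma T_notmem:
  assumes "{A, insert i A} \<in> Tn n" "i \<notin> A"
  shows "\<forall>j\<in>A. j < i"
proof -
  from assms(1) obtain B where e: "{A, insert i A} = {B - {Max B}, B}" and
    Bm: "B \<in> Pow {..<n} - {{}}"
    unfolding Tn_def by (rule imageE)
  have B: "B \<subseteq> {..<n}" "B \<noteq> {}" using Bm by auto
  have fin: "finite B" using B(1) finite_subset by blast
  have m: "Max B \<in> B" using fin B(2) by (rule Max_in)
  have Bi: "B = insert (Max B) (B - {Max B})" using m by blast
  have eq: "{A, insert i A} = {B - {Max B}, insert (Max B) (B - {Max B})}"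
    unfolding e by (subst Bi[symmetric]) (rule refl)
  have nm: "Max B \<notin> B - {Max B}" by blast
  have AB: "A = B - {Max B} \<and> i = Max B" by (rule edge_unique[OF assms(2) nm eq])
  show ?thesis
  proof
    fix j assume j: "j \<in> A"
    then have "j \<in> B" "j \<noteq> Max B" using AB by auto
    then have "j \<le> Max B" "j \<noteq> Max B" using fin by (auto intro: Max_ge)
    then show "j < i" using AB by linarith
  qed
qed

lemma card_T: "card (Tn n) = 2 ^ n - 1"
proof -
  have inj: "inj_on (\<lambda>B. {B - {Max B}, B}) (Pow {..<n} - {{}})"
  proof (rule inj_onI)
    fix B B' assume "{B - {Max B}, B} = {B' - {Max B'}, B'}"
    then have "\<Union>{B - {Max B}, B} = \<Union>{B' - {Max B'}, B'}" by simp
    then show "B = B'" by auto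
  qed
  have "card (Tn n) = card (Pow {..<n} - {{}})" unfolding Tn_def using card_image[OF inj] .
  also have "\<dots> = 2 ^ n - 1" by (simp add: card_Pow)
  finally show ?thesis .
qed

lemma T_good:
  assumes eR: "e \<in> hypercube_edges n - Tn n"
  shows "good (Tn n \<union> {e' \<in> hypercube_edges n - Tn n. card (\<Inter>e') < card (\<Inter>e)}) e"
proof -
  let ?H = "Tn n \<union> {e' \<in> hypercube_edges n - Tn n. card (\<Inter>e') < card (\<Inter>e)}"
  have eH: "e \<in> hypercube_edges n" and eT: "e \<notin> Tn n" using eR by auto
  from eH obtain A i where e: "e = {A, insert i A}" and A: "A \<subseteq> {..<n}" "i < n" "i \<notin> A"
    unfolding hyp_mem by (elim exE conjE)
  have "\<not> (\<forall>j\<in>A. j < i)"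
  proof
    assume "\<forall>j\<in>A. j < i"
    then have "{A, insert i A} \<in> Tn n" using T_mem[OF A] by blast
    then show False using eT e by simp
  qed
  then obtain j where j: "j \<in> A" "\<not> j < i" by blast
  have fin: "finite A" using A(1) finite_subset by blast
  define m where "m = Max A"
  have mA: "m \<in> A" unfolding m_def using fin j(1) by (intro Max_in) auto
  have jm: "j \<le> m" unfolding m_def using fin j(1) by (rule Max_ge)
  have im: "i < m" using jm j(2) mA A(3) by (cases "i = m") auto
  define B where "B = A - {m}"
  have AB: "A = insert m B" "m \<notin> B" using mA unfolding B_def by auto
  have Blt: "\<forall>k\<in>B. k < m"
  proof
    fix k assume "k \<in> B"
    then have "k \<in> A" "k \<noteq> m" unfolding B_def by auto
    then have "k \<le> m" "k \<noteq> m" unfolding m_def using fin by (auto intro: Max_ge)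
    then show "k < m" by linarith
  qed
  have iB: "i \<notin> B" using A(3) unfolding B_def by blast
  have Bsub: "B \<subseteq> {..<n}" using A(1) unfolding B_def by blast
  have mn: "m < n" using mA A(1) by blast
  have rk: "card (\<Inter>e) = card A" unfolding e by (simp add: Int_absorb2 subset_insertI)
  have nH: "e \<notin> ?H" using eT rk by simp
  have e1: "{insert i A, insert i B} \<in> ?H"
  proof -
    have eq: "{insert i A, insert i B} = {insert i B, insert m (insert i B)}"
      using AB(1) by (simp add: insert_commute)
    have "{insert i B, insert m (insert i B)} \<in> Tn n"
      by (rule T_mem) (use Blt im A(2) Bsub AB(2) mn in auto)
    then show ?thesis unfolding eq by blast
  qed
  have e2: "{insert i B, B} \<in> ?H"
  proof (cases "{B, insert i B} \<in> Tn n")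
    case True then show ?thesis by (simp add: insert_commute)
  next
    case False
    have h: "{B, insert i B} \<in> hypercube_edges n" unfolding hyp_mem
      using Bsub A(2) iB by blast
    have fB: "finite B" using fin unfolding B_def by blast
    have "card (\<Inter>{B, insert i B}) = card B" by (simp add: Int_absorb2 subset_insertI)
    also have "card B < card A" using fB AB by simp
    finally have "card (\<Inter>{B, insert i B}) < card (\<Inter>e)" using rk by simp
    then have "{B, insert i B} \<in> ?H" using h False by blast
    then show ?thesis by (simp add: insert_commute)
  qed
  have e3: "{B, A} \<in> ?H"
  proof -
    have "{B, insert m B} \<in> Tn n" by (rule T_mem[OF Bsub mn AB(2) Blt])
    then show ?thesis using AB(1) by simp
  qed
  have dist: "distinct [A, insert i A, insert i B, B]"
    using AB A(3) im iB by auto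
  show ?thesis unfolding good_def
    apply (intro conjI nH)
    apply (rule exI[of _ A], rule exI[of _ "insert i A"], rule exI[of _ "insert i B"], rule exI[of _ B])
    apply (intro conjI dist e e1 e2 e3)
    done
qed

lemma upper:
  "weakly_saturated n (Tn n)"
proof -
  let ?R = "hypercube_edges n - Tn n"
  have fin: "finite ?R" using finite_hyp by auto
  have "\<forall>e\<in>?R. good (Tn n \<union> {e'\<in>?R. card (\<Inter>e') < card (\<Inter>e)}) e"
    using T_good by blast
  then obtain es where es: "distinct es" "set es = ?R"
     "\<forall>k<length es. good (Tn n \<union> set (take k es)) (es!k)"
    using order_exists[OF fin, of "Tn n" "\<lambda>e. card (\<Inter>e)"] by blast
  show ?thesis unfolding weakly_saturated_def
    apply (intro conjI T_sub exI[of _ es])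
    using es good_creates by auto
qed


theorem mainTheorem12:
  fixes n :: nat
  assumes "n \<ge> 1"
  shows "wsat_Qn_Q2 n = 2 ^ n - 1"
  unfolding wsat_Qn_Q2_def
proof (rule Least_equality)
  show "\<exists>G. weakly_saturated n G \<and> card G = 2 ^ n - 1"
    using upper[of n] card_T[of n] by blast
next
  fix m assume "\<exists>G. weakly_saturated n G \<and> card G = m"
  then obtain G where "weakly_saturated n G" "card G = m" by blast
  then have "2 ^ n \<le> m + 1" using lower_bound[of n G] by simp
  then show "2 ^ n - 1 \<le> m" by linarith
qed


end
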